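(* Let $\mathcal H$ be a real Hilbert space and let $f:\mathcal H\to\mathbb R$ be continuously differentiable and $\mu$-strongly convex for some $\mu>0$, with unique minimizer $x^*$. Let $t_0>0$ and let $u:[t_0,+\infty[\to\mathcal H$ be a classical solution of $$\dddot u(t)+3\sqrt\mu\,\ddot u(t)+2\mu\,\dot u(t)+\sqrt\mu\,\nabla f\Big(u(t)+\tfrac{1}{\sqrt\mu}\dot u(t)\Big)=0 .$$ Set $y(t)=u(t)+\frac{1}{\sqrt\mu}\dot u(t)$, $$\mathcal E(t)=f(y(t))-\inf_{\mathcal H}f+\frac12\Big\|\sqrt\mu\,(y(t)-x^* )+\dot u(t)+\tfrac1{\sqrt\mu}\ddot u(t)\Big\|^2,$$ $F(t_0)=f(u(t_0))-\inf_{\mathcal H}f$ and $C=\mathcal E(t_0)e^{\sqrt\mu\,t_0}$. Then for all $t\ge t_0$: $$f(y(t))-\inf_{\mathcal H}f\le \mathcal E(t_0)e^{-\sqrt\mu(t-t_0)};$$ $$f(u(t))-\inf_{\mathcal H}f\le\big(C\sqrt\mu\,t+e^{\sqrt\mu t_0}F(t_0)-C\sqrt\mu\,t_0\big)e^{-\sqrt\mu t};$$ $$\|y(t)-x^*\|^2\le\frac{e^{\sqrt\mu t_0}}{\sqrt\mu}\Big(\sqrt\mu\,\|y(t_0)-x^*\|^2+2\mathcal E(t_0)(t-t_0)\Big)e^{-\sqrt\mu t};$$ $$\|u(t)-x^*\|^2\le\frac{2}{\mu}\big(C\sqrt\mu\,t+e^{\sqrt\mu t_0}F(t_0)-C\sqrt\mu\,t_0\big)e^{-\sqrt\mu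 t}.$$
   Context: $f$ is $\mu$-strongly convex if $f-\frac\mu2\|\cdot\|^2$ is convex. $\dot u,\ddot u,\dddot u$ are time derivatives of $u$. *)

theory Defs
  imports "HOL-Analysis.Analysis"
begin

definition strongly_convex :: "real \<Rightarrow> ('a::real_inner \<Rightarrow> real) \<Rightarrow> bool" where
  "strongly_convex \<mu> f \<longleftrightarrow> convex_on UNIV (\<lambda>x. f x - \<mu> / 2 * (norm x)\<^sup>2)"

end

theory Submission imports Defs begin

lemma to_field:
  assumes "(\<phi> has_derivative \<phi>') F" "\<And>h. \<phi>' h = h * D"
  shows "(\<phi> has_field_derivative D) F"
proof -
  have "\<phi>' = (*) D" by (rule ext) (simp add: assms(2) mult.commute)
  then show ?thesis using assms(1) unfolding has_field_derivative_def by simp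
qed

lemma tangent_ineq:
  fixes g :: "'a::real_inner \<Rightarrow> real"
  assumes cv: "convex_on UNIV g" and d: "(g has_derivative g') (at x)"
  shows "g z \<ge> g x + g' (z - x)"
proof -
  define h where "h = (\<lambda>t::real. g (x + t *\<^sub>R (z - x)))"
  interpret L: bounded_linear g' using d by (rule has_derivative_bounded_linear)
  have ch: "convex_on UNIV h"
    unfolding convex_on_def
  proof (intro conjI ballI allI impI)
    fix a b :: real and p q :: real
    assume "p \<ge> 0" "q \<ge> 0" "p + q = 1"
    have e: "x + (p *\<^sub>R a + q *\<^sub>R b) *\<^sub>R (z - x) = p *\<^sub>R (x + a *\<^sub>R (z - x)) + q *\<^sub>R (x + b *\<^sub>R (z - x))"
    proof -
      have "x + (p *\<^sub>R a + q *\<^sub>R b) *\<^sub>R (z - x) = (p + q) *\<^sub>R x + (p *\<^sub>R a + q *\<^sub>R b) *\<^sub>R (z - x)"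
        using \<open>p + q = 1\<close> by simp
      also have "\<dots> = p *\<^sub>R (x + a *\<^sub>R (z - x)) + q *\<^sub>R (x + b *\<^sub>R (z - x))"
        by (simp add: algebra_simps)
      finally show ?thesis .
    qed
    show "h (p *\<^sub>R a + q *\<^sub>R b) \<le> p * h a + q * h b"
      unfolding h_def e using convex_onD[OF cv, of q "x + a *\<^sub>R (z - x)" "x + b *\<^sub>R (z - x)"] \<open>p \<ge> 0\<close> \<open>q \<ge> 0\<close> \<open>p + q = 1\<close>
      by (simp add: eq_diff_eq[symmetric] )
  qed simp
  have hd: "(h has_field_derivative g' (z - x)) (at 0)"
  proof -
    have "((\<lambda>t. x + t *\<^sub>R (z - x)) has_derivative (\<lambda>t. t *\<^sub>R (z - x))) (at 0)"
      by (auto intro!: derivative_eq_intros)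
    from has_derivative_compose[OF this] d
    have "(h has_derivative (\<lambda>t. g' (t *\<^sub>R (z - x)))) (at 0)" by (simp add: h_def)
    then show ?thesis by (rule to_field) (simp add: L.scaleR)
  qed
  have "h 1 - h 0 \<ge> g' (z - x) * (1 - 0)"
    by (rule convex_on_imp_above_tangent[OF ch]) (use hd in auto)
  then show ?thesis by (simp add: h_def)
qed

lemma decr:
  fixes \<phi> \<phi>' :: "real \<Rightarrow> real"
  assumes d: "\<And>t. t \<ge> t0 \<Longrightarrow> (\<phi> has_real_derivative \<phi>' t) (at t within {t0..})"
    and n: "\<And>t. t \<ge> t0 \<Longrightarrow> \<phi>' t \<le> 0" and t: "t \<ge> t0"
  shows "\<phi> t \<le> \<phi> t0"
proof -
  have "\<exists>x\<in>{t0..t}. \<phi> t - \<phi> t0 = (\<lambda>h. h * \<phi>' x) (t - t0)"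
    apply (rule mvt_very_simple[OF t])
  proof -
    fix x assume "t0 \<le> x" "x \<le> t"
    have "(\<phi> has_derivative (*) (\<phi>' x)) (at x within {t0..t})"
      using d[of x] \<open>t0 \<le> x\<close> unfolding has_field_derivative_def
      by (auto intro: has_derivative_subset)
    moreover have "(\<lambda>a. a * \<phi>' x) = (*) (\<phi>' x)" by (auto simp: mult.commute)
    ultimately show "(\<phi> has_derivative (\<lambda>a. a * \<phi>' x)) (at x within {t0..t})" by simp
  qed
  then obtain x where "x \<in> {t0..t}" "\<phi> t - \<phi> t0 = (t - t0) * \<phi>' x" by auto
  moreover have "\<phi>' x \<le> 0" using n \<open>x \<in> {t0..t}\<close> by auto
  moreover have "(t - t0) * \<phi>' x \<le> 0" using \<open>\<phi>' x \<le> 0\<close> t by (simp add: mult_nonneg_nonpos)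
  ultimately show ?thesis by linarith
qed

lemma sc_grad:
  fixes f :: "'a::real_inner \<Rightarrow> real"
  assumes grad: "\<And>x. (f has_derivative (\<lambda>h. gradf x \<bullet> h)) (at x)"
    and sconv: "strongly_convex \<mu> f"
  shows "f z \<ge> f x + gradf x \<bullet> (z - x) + \<mu> / 2 * (norm (z - x))\<^sup>2"
proof -
  have cv: "convex_on UNIV (\<lambda>x. f x - \<mu> / 2 * (x \<bullet> x))"
    using sconv unfolding strongly_convex_def by (simp add: power2_norm_eq_inner)
  have d: "((\<lambda>x. f x - \<mu> / 2 * (x \<bullet> x)) has_derivative (\<lambda>h. gradf x \<bullet> h - \<mu> / 2 * (h \<bullet> x + x \<bullet> h))) (at x)"
    by (auto intro!: derivative_eq_intros grad)
  from tangent_ineq[OF cv d, of z]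
  show ?thesis
    by (simp add: power2_norm_eq_inner algebra_simps inner_commute)
qed


lemma sqd:
  fixes w :: "real \<Rightarrow> 'a::real_inner"
  assumes "(w has_vector_derivative w') (at t within S)"
  shows "((\<lambda>t. w t \<bullet> w t) has_real_derivative (2 * (w t \<bullet> w'))) (at t within S)"
proof -
  have d: "(w has_derivative (\<lambda>h. h *\<^sub>R w')) (at t within S)"
    using assms by (simp add: has_vector_derivative_def)
  show ?thesis
    by (rule to_field[OF has_derivative_inner[OF d d]]) (simp add: inner_commute algebra_simps)
qed

theorem theorem5p1:
  fixes f :: "'a::{real_inner, complete_space} \<Rightarrow> real"
    and gradf :: "'a \<Rightarrow> 'a"
    and \<mu> t0 :: real and xs :: 'a
    and u u1 u2 u3 :: "real \<Rightarrow> 'a"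
    and y :: "real \<Rightarrow> 'a" and E :: "real \<Rightarrow> real" and F0 C :: real
  assumes grad: "\<And>x. (f has_derivative (\<lambda>h. gradf x \<bullet> h)) (at x)"
    and grad_cont: "continuous_on UNIV gradf"
    and mu_pos: "\<mu> > 0"
    and sconv: "strongly_convex \<mu> f"
    and minimizer: "\<And>x. f xs \<le> f x"
    and t0_pos: "t0 > 0"
    and du: "\<And>t. t \<ge> t0 \<Longrightarrow> (u has_vector_derivative u1 t) (at t within {t0..})"
    and du1: "\<And>t. t \<ge> t0 \<Longrightarrow> (u1 has_vector_derivative u2 t) (at t within {t0..})"
    and du2: "\<And>t. t \<ge> t0 \<Longrightarrow> (u2 has_vector_derivative u3 t) (at t within {t0..})"
    and u3_cont: "continuous_on {t0..} u3"
    and ode: "\<And>t. t \<ge> t0 \<Longrightarrow>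
       u3 t + (3 * sqrt \<mu>) *\<^sub>R u2 t + (2 * \<mu>) *\<^sub>R u1 t
       + sqrt \<mu> *\<^sub>R gradf (u t + (1 / sqrt \<mu>) *\<^sub>R u1 t) = 0"
    and y_def: "y = (\<lambda>t. u t + (1 / sqrt \<mu>) *\<^sub>R u1 t)"
    and E_def: "E = (\<lambda>t. f (y t) - (INF x. f x)
       + 1/2 * (norm (sqrt \<mu> *\<^sub>R (y t - xs) + u1 t + (1 / sqrt \<mu>) *\<^sub>R u2 t))\<^sup>2)"
    and F0_def: "F0 = f (u t0) - (INF x. f x)"
    and C_def: "C = E t0 * exp (sqrt \<mu> * t0)"
  shows "\<forall>t\<ge>t0.
     f (y t) - (INF x. f x) \<le> E t0 * exp (- sqrt \<mu> * (t - t0))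
   \<and> f (u t) - (INF x. f x) \<le>
       (C * sqrt \<mu> * t + exp (sqrt \<mu> * t0) * F0 - C * sqrt \<mu> * t0) * exp (- sqrt \<mu> * t)
   \<and> (norm (y t - xs))\<^sup>2 \<le>
       exp (sqrt \<mu> * t0) / sqrt \<mu> * (sqrt \<mu> * (norm (y t0 - xs))\<^sup>2 + 2 * E t0 * (t - t0))
       * exp (- sqrt \<mu> * t)
   \<and> (norm (u t - xs))\<^sup>2 \<le>
       2 / \<mu> * (C * sqrt \<mu> * t + exp (sqrt \<mu> * t0) * F0 - C * sqrt \<mu> * t0) * exp (- sqrt \<mu> * t)"
proof -
  define s where "s = sqrt \<mu>"
  have s_pos: "s > 0" using mu_pos by (simp add: s_def)
  have ss: "\<mu> = s * s" using mu_pos by (simp add: s_def)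
  have fstar: "(INF x. f x) = f xs"
    by (rule cInf_eq_minimum) (auto intro: minimizer)
  have G: "\<And>x z. f z \<ge> f x + gradf x \<bullet> (z - x) + \<mu> / 2 * (norm (z - x))\<^sup>2"
    using sc_grad[OF grad sconv] by blast
  have G2: "f z \<ge> f x + gradf x \<bullet> (z - x)" for x z
  proof -
    have "\<mu> / 2 * (norm (z - x))\<^sup>2 \<ge> 0" using mu_pos by simp
    then show ?thesis using G[of x z] by linarith
  qed
  have g0: "gradf xs = 0"
  proof -
    have "(\<lambda>h. gradf xs \<bullet> h) = (\<lambda>v. 0)"
      by (rule differential_zero_maxmin[of xs UNIV f, OF _ _ grad]) (auto intro: minimizer)
    then have "gradf xs \<bullet> gradf xs = 0" by (rule fun_cong)
    thus ?thesis by simp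
  qed
  define b where "b = (\<lambda>t. u1 t + (1/s) *\<^sub>R u2 t)"
  define bd where "bd = (\<lambda>t. u2 t + (1/s) *\<^sub>R u3 t)"
  define v where "v = (\<lambda>t. s *\<^sub>R (y t - xs) + b t)"
  define F where "F = (\<lambda>t. f (u t) - f xs)"
  have yd: "\<And>t. t\<ge>t0 \<Longrightarrow> (y has_vector_derivative b t) (at t within {t0..})"
    unfolding y_def b_def s_def[symmetric] using du du1
    by (auto intro!: derivative_eq_intros)
  have bdd: "\<And>t. t\<ge>t0 \<Longrightarrow> (b has_vector_derivative bd t) (at t within {t0..})"
    unfolding bd_def b_def using du1 du2
    by (auto intro!: derivative_eq_intros)
  have vd: "\<And>t. t\<ge>t0 \<Longrightarrow> (v has_vector_derivative (s *\<^sub>R b t + bd t)) (at t within {t0..})"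
    unfolding v_def using yd bdd
    by (auto intro!: derivative_eq_intros)
  have odeb: "\<And>t. t\<ge>t0 \<Longrightarrow> bd t = - (2 * s) *\<^sub>R b t - gradf (y t)"
  proof -
    fix t assume t: "t \<ge> t0"
    have "u3 t = - ((3 * s) *\<^sub>R u2 t + (2 * s * s) *\<^sub>R u1 t + s *\<^sub>R gradf (y t))"
    proof -
      have "u3 t + ((3 * s) *\<^sub>R u2 t + (2 * s * s) *\<^sub>R u1 t + s *\<^sub>R gradf (y t)) = 0"
        using ode[OF t] unfolding y_def s_def[symmetric] by (simp add: add.assoc ss mult.assoc)
      then show ?thesis by (simp only: eq_neg_iff_add_eq_0)
    qed
    then have hyp: "(1/s) *\<^sub>R u3 t = - (3 *\<^sub>R u2 t + (2 * s) *\<^sub>R u1 t + gradf (y t))"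
      using s_pos by (simp add: scaleR_diff_right)
    have "(2 * s) *\<^sub>R ((1/s) *\<^sub>R u2 t) = 2 *\<^sub>R u2 t" using s_pos by simp
    then show "bd t = - (2 * s) *\<^sub>R b t - gradf (y t)"
    proof -
      have "(3::real) *\<^sub>R u2 t = (1 + 2) *\<^sub>R u2 t" by simp
      also have "\<dots> = u2 t + 2 *\<^sub>R u2 t" by (simp only: scaleR_add_left scaleR_one)
      finally have "3 *\<^sub>R u2 t = u2 t + 2 *\<^sub>R u2 t" .
      then show ?thesis
        unfolding bd_def b_def hyp using \<open>(2 * s) *\<^sub>R ((1/s) *\<^sub>R u2 t) = 2 *\<^sub>R u2 t\<close>
        by (simp add: algebra_simps)
    qed
  qed
  have Eeq: "\<And>t. E t = f (y t) - f xs + 1/2 * (v t \<bullet> v t)"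
    unfolding E_def fstar v_def b_def s_def by (simp add: power2_norm_eq_inner add.assoc)
  have fyd: "\<And>t. t\<ge>t0 \<Longrightarrow> ((\<lambda>t. f (y t)) has_real_derivative (gradf (y t) \<bullet> b t)) (at t within {t0..})"
  proof -
    fix t assume t: "t \<ge> t0"
    have "((\<lambda>t. f (y t)) has_derivative (\<lambda>h. gradf (y t) \<bullet> (h *\<^sub>R b t))) (at t within {t0..})"
      using has_derivative_compose[OF yd[OF t, unfolded has_vector_derivative_def] grad] .
    then show "((\<lambda>t. f (y t)) has_real_derivative (gradf (y t) \<bullet> b t)) (at t within {t0..})"
      by (rule to_field) simp
  qed
  have fud: "\<And>t. t\<ge>t0 \<Longrightarrow> ((\<lambda>t. f (u t)) has_real_derivative (gradf (u t) \<bullet> u1 t)) (at t within {t0..})"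
  proof -
    fix t assume t: "t \<ge> t0"
    have "((\<lambda>t. f (u t)) has_derivative (\<lambda>h. gradf (u t) \<bullet> (h *\<^sub>R u1 t))) (at t within {t0..})"
      using has_derivative_compose[OF du[OF t, unfolded has_vector_derivative_def] grad] .
    then show "((\<lambda>t. f (u t)) has_real_derivative (gradf (u t) \<bullet> u1 t)) (at t within {t0..})"
      by (rule to_field) simp
  qed
  define Ed where "Ed = (\<lambda>t. gradf (y t) \<bullet> b t + v t \<bullet> (s *\<^sub>R b t + bd t))"
  have Ed_le: "Ed t + s * E t \<le> 0" if t: "t \<ge> t0" for t
  proof -
    define A where "A = y t - xs"
    define B where "B = b t"
    define g where "g = gradf (y t)"
    have key: "g \<bullet> A \<ge> f (y t) - f xs + (s * s) / 2 * (A \<bullet> A)"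
    proof -
      have n: "(norm (xs - y t))\<^sup>2 = A \<bullet> A"
        unfolding A_def power2_norm_eq_inner[symmetric] by (simp add: norm_minus_commute)
      have i: "g \<bullet> (xs - y t) = - (g \<bullet> A)" unfolding A_def by (simp add: inner_diff_right)
      show ?thesis using G[of "y t" xs] unfolding g_def[symmetric] n i ss by linarith
    qed
    have h1: "s *\<^sub>R b t + bd t = - (s *\<^sub>R B) - g"
    proof -
      have "(2 * s) *\<^sub>R b t = s *\<^sub>R b t + s *\<^sub>R b t" by (simp only: mult_2 scaleR_add_left)
      then show ?thesis unfolding odeb[OF t] B_def g_def by (simp add: algebra_simps)
    qed
    have vA: "v t = s *\<^sub>R A + B" unfolding v_def A_def B_def ..
    have e1: "Ed t = - (s * s) * (A \<bullet> B) - s * (A \<bullet> g) - s * (B \<bullet> B)"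
      unfolding Ed_def h1 unfolding vA g_def[symmetric] B_def[symmetric]
      by (simp add: inner_add_left inner_add_right inner_diff_left inner_diff_right inner_commute algebra_simps)
    have e2: "E t = (f (y t) - f xs) + 1/2 * ((s * s) * (A \<bullet> A) + 2 * s * (A \<bullet> B) + B \<bullet> B)"
      unfolding Eeq vA
      by (simp add: inner_add_left inner_add_right inner_commute algebra_simps)
    have k2: "s * (g \<bullet> A) \<ge> s * (f (y t) - f xs + (s * s) / 2 * (A \<bullet> A))"
      using key s_pos by (simp add: mult_left_mono)
    have bb: "s / 2 * (B \<bullet> B) \<ge> 0" using s_pos by simp
    have "Ed t + s * E t = - (s * (g \<bullet> A)) + s * (f (y t) - f xs + (s * s) / 2 * (A \<bullet> A)) - s / 2 * (B \<bullet> B)"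
      unfolding e1 e2 by (simp add: algebra_simps inner_commute)
    then show ?thesis using k2 bb by linarith
  qed
  have E1: "E t * exp (s * t) \<le> E t0 * exp (s * t0)" if t: "t \<ge> t0" for t
  proof -
    have "(\<lambda>t. exp (s * t) * E t) t \<le> (\<lambda>t. exp (s * t) * E t) t0"
    proof (rule decr[OF _ _ t])
      fix t assume t: "t \<ge> t0"
      show "((\<lambda>t. exp (s * t) * E t) has_real_derivative exp (s * t) * (Ed t + s * E t)) (at t within {t0..})"
        unfolding Eeq[abs_def] Ed_def
        by (auto intro!: derivative_eq_intros fyd[OF t] sqd[OF vd[OF t]] simp: algebra_simps)
      show "exp (s * t) * (Ed t + s * E t) \<le> 0"
        using Ed_le[OF t] by (simp add: mult_nonneg_nonpos)
    qed
    then show ?thesis by (simp add: mult.commute)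
  qed
  have Ey: "f (y t) - f xs \<le> E t" for t
    unfolding Eeq by simp
  have C1: "f (y t) - f xs \<le> E t0 * exp (- s * (t - t0))" if t: "t \<ge> t0" for t
  proof -
    have "E t \<le> E t0 * exp (s * t0) / exp (s * t)" using E1[OF t] by (simp add: field_simps)
    also have "\<dots> = E t0 * exp (- s * (t - t0))"
      by (simp add: algebra_simps exp_diff)
    finally show ?thesis using Ey[of t] by simp
  qed
  have C1': "exp (s * t) * (f (y t) - f xs) \<le> C" if t: "t \<ge> t0" for t
  proof -
    have "exp (s * t) * (f (y t) - f xs) \<le> exp (s * t) * (E t0 * exp (- s * (t - t0)))"
      using C1[OF t] by simp
    also have "\<dots> = C"
      unfolding C_def s_def[symmetric] by (simp add: exp_add[symmetric] algebra_simps)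
    finally show ?thesis .
  qed
  have C2: "exp (s * t) * F t - s * C * t \<le> exp (s * t0) * F t0 - s * C * t0" if t: "t \<ge> t0" for t
  proof (rule decr[OF _ _ t])
    fix t assume t: "t \<ge> t0"
    show "((\<lambda>t. exp (s * t) * F t - s * C * t) has_real_derivative
        exp (s * t) * (s * F t + gradf (u t) \<bullet> u1 t) - s * C) (at t within {t0..})"
      unfolding F_def
      by (auto intro!: derivative_eq_intros fud[OF t] simp: algebra_simps)
    have u1e: "u1 t = s *\<^sub>R (y t - u t)" unfolding y_def s_def[symmetric] using s_pos by simp
    have "gradf (u t) \<bullet> u1 t = s * (gradf (u t) \<bullet> (y t - u t))" unfolding u1e by simp
    also have "\<dots> \<le> s * (f (y t) - f (u t))"
      using G2[of "u t" "y t"] s_pos by (simp add: mult_left_mono)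
    finally have "s * F t + gradf (u t) \<bullet> u1 t \<le> s * (f (y t) - f xs)"
      unfolding F_def by (simp add: algebra_simps)
    then have "exp (s * t) * (s * F t + gradf (u t) \<bullet> u1 t) \<le> exp (s * t) * (s * (f (y t) - f xs))"
      by (rule mult_left_mono) simp
    also have "\<dots> = s * (exp (s * t) * (f (y t) - f xs))" by (simp add: algebra_simps)
    also have "\<dots> \<le> s * C" using C1'[OF t] s_pos by (simp add: mult_left_mono)
    finally show "exp (s * t) * (s * F t + gradf (u t) \<bullet> u1 t) - s * C \<le> 0" by simp
  qed
  have C2': "F t \<le> (C * s * t + exp (s * t0) * F0 - C * s * t0) * exp (- s * t)" if t: "t \<ge> t0" for t
  proof -
    have F0e: "F0 = F t0" unfolding F0_def F_def fstar ..
    have "exp (s * t) * F t \<le> C * s * t + exp (s * t0) * F0 - C * s * t0"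
      using C2[OF t] unfolding F0e by (simp add: algebra_simps)
    then have "exp (- s * t) * (exp (s * t) * F t) \<le> exp (- s * t) * (C * s * t + exp (s * t0) * F0 - C * s * t0)"
      by (simp add: mult_left_mono)
    moreover have "exp (- s * t) * (exp (s * t) * F t) = F t"
      by (simp add: mult.assoc[symmetric] exp_add[symmetric])
    moreover have "exp (- s * t) * (C * s * t + exp (s * t0) * F0 - C * s * t0) = (C * s * t + exp (s * t0) * F0 - C * s * t0) * exp (- s * t)"
      by (rule mult.commute)
    ultimately show ?thesis by linarith
  qed
  define a where "a = (\<lambda>t. y t - xs)"
  have C3: "exp (s * t) * (a t \<bullet> a t) - 2 * C / s * t \<le> exp (s * t0) * (a t0 \<bullet> a t0) - 2 * C / s * t0"
    if t: "t \<ge> t0" for t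
  proof (rule decr[OF _ _ t])
    fix t assume t: "t \<ge> t0"
    have ad: "(a has_vector_derivative b t) (at t within {t0..})"
      unfolding a_def using yd[OF t] by (auto intro!: derivative_eq_intros)
    show "((\<lambda>t. exp (s * t) * (a t \<bullet> a t) - 2 * C / s * t) has_real_derivative
        exp (s * t) * (s * (a t \<bullet> a t) + 2 * (a t \<bullet> b t)) - 2 * C / s) (at t within {t0..})"
      using s_pos by (auto intro!: derivative_eq_intros sqd[OF ad] simp: algebra_simps)
    have vv: "v t \<bullet> v t = s * (s * (a t \<bullet> a t) + 2 * (a t \<bullet> b t)) + b t \<bullet> b t"
      unfolding v_def a_def[THEN fun_cong, of t, symmetric]
      by (simp add: inner_add_left inner_add_right inner_commute algebra_simps)
    have "v t \<bullet> v t \<le> 2 * E t" unfolding Eeq using minimizer[of "y t"] by simp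
    then have "s * (s * (a t \<bullet> a t) + 2 * (a t \<bullet> b t)) \<le> 2 * E t"
      unfolding vv by (smt (verit) inner_ge_zero)
    then have "exp (s * t) * (s * (s * (a t \<bullet> a t) + 2 * (a t \<bullet> b t))) \<le> exp (s * t) * (2 * E t)"
      by (simp add: mult_left_mono)
    also have "\<dots> \<le> 2 * C" using E1[OF t] unfolding C_def s_def[symmetric] by (simp add: algebra_simps)
    finally have h: "exp (s * t) * (s * (s * (a t \<bullet> a t) + 2 * (a t \<bullet> b t))) \<le> 2 * C" .
    have "exp (s * t) * (s * (a t \<bullet> a t) + 2 * (a t \<bullet> b t)) * s \<le> 2 * C"
      using h by (simp only: mult.commute mult.left_commute)
    then have "exp (s * t) * (s * (a t \<bullet> a t) + 2 * (a t \<bullet> b t)) \<le> 2 * C / s"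
      using s_pos by (simp add: pos_le_divide_eq)
    then show "exp (s * t) * (s * (a t \<bullet> a t) + 2 * (a t \<bullet> b t)) - 2 * C / s \<le> 0" by simp
  qed
  have C3': "(norm (y t - xs))\<^sup>2 \<le> exp (s * t0) / s * (s * (norm (y t0 - xs))\<^sup>2 + 2 * E t0 * (t - t0)) * exp (- s * t)"
    if t: "t \<ge> t0" for t
  proof -
    have "exp (s * t) * (a t \<bullet> a t) \<le> exp (s * t0) / s * (s * (a t0 \<bullet> a t0) + 2 * E t0 * (t - t0))"
    proof -
      have "exp (s * t0) / s * (s * (a t0 \<bullet> a t0) + 2 * E t0 * (t - t0))
          = exp (s * t0) * (a t0 \<bullet> a t0) + 2 * C / s * t - 2 * C / s * t0"
        unfolding C_def s_def[symmetric] using s_pos by (simp add: field_simps)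
      then show ?thesis using C3[OF t] by linarith
    qed
    then have "exp (- s * t) * (exp (s * t) * (a t \<bullet> a t)) \<le> exp (- s * t) * (exp (s * t0) / s * (s * (a t0 \<bullet> a t0) + 2 * E t0 * (t - t0)))"
      by (rule mult_left_mono) simp_all
    moreover have "exp (- s * t) * (exp (s * t) * (a t \<bullet> a t)) = (norm (y t - xs))\<^sup>2"
      unfolding a_def by (simp add: mult.assoc[symmetric] exp_add[symmetric] power2_norm_eq_inner)
    moreover have "exp (- s * t) * (exp (s * t0) / s * (s * (a t0 \<bullet> a t0) + 2 * E t0 * (t - t0)))
       = exp (s * t0) / s * (s * (norm (y t0 - xs))\<^sup>2 + 2 * E t0 * (t - t0)) * exp (- s * t)"
      unfolding a_def power2_norm_eq_inner by (rule mult.commute)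
    ultimately show ?thesis by linarith
  qed
  have C4: "(norm (u t - xs))\<^sup>2 \<le> 2 / \<mu> * F t" for t
  proof -
    have "f (u t) \<ge> f xs + \<mu> / 2 * (norm (u t - xs))\<^sup>2" using G[of xs "u t"] g0 by simp
    then show ?thesis unfolding F_def using mu_pos by (simp add: field_simps)
  qed
  show ?thesis
  proof (intro allI impI conjI)
    fix t assume t: "t \<ge> t0"
    show "f (y t) - (INF x. f x) \<le> E t0 * exp (- sqrt \<mu> * (t - t0))"
      using C1[OF t] unfolding fstar s_def .
    show "f (u t) - (INF x. f x) \<le> (C * sqrt \<mu> * t + exp (sqrt \<mu> * t0) * F0 - C * sqrt \<mu> * t0) * exp (- sqrt \<mu> * t)"
      using C2'[OF t] unfolding fstar s_def F_def .
    show "(norm (y t - xs))\<^sup>2 \<le> exp (sqrt \<mu> * t0) / sqrt \<mu> * (sqrt \<mu> * (norm (y t0 - xs))\<^sup>2 + 2 * E t0 * (t - t0)) * exp (- sqrt \<mu> * t)"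
      using C3'[OF t] unfolding s_def .
    have "2 / \<mu> * F t \<le> 2 / \<mu> * ((C * s * t + exp (s * t0) * F0 - C * s * t0) * exp (- s * t))"
      using C2'[OF t] mu_pos by (intro mult_left_mono) simp_all
    then show "(norm (u t - xs))\<^sup>2 \<le> 2 / \<mu> * (C * sqrt \<mu> * t + exp (sqrt \<mu> * t0) * F0 - C * sqrt \<mu> * t0) * exp (- sqrt \<mu> * t)"
    proof -
      have "2 / \<mu> * ((C * s * t + exp (s * t0) * F0 - C * s * t0) * exp (- s * t))
          = 2 / \<mu> * (C * sqrt \<mu> * t + exp (sqrt \<mu> * t0) * F0 - C * sqrt \<mu> * t0) * exp (- sqrt \<mu> * t)"
        unfolding s_def by (rule mult.assoc[symmetric])
      then show ?thesis using C4[of t] \<open>2 / \<mu> * F t \<le> _\<close> by linarith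
    qed
  qed
qed

end
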